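(* In the cloud-side decompression procedure described in the context, the computational cost of the transformations the cloud applies to recover a stored string $F'$ of length $n_b$ is $O(N_B + n_b\cdot N)$, where $N_B$ is the number of stored bases and $N$ is the alphabet size.
   Context: The cloud stores, for each received string $F'$ of length $n_b$ over the alphabet $\Sigma=\{0,1\}^k$ of size $N$, a record consisting of a file identifier, a pointer to a base $B$ (a sorted string of bracket IDs) kept in a set of $N_B$ bases, a string describing swaps (a bitmap of marked positions together with an array of partner positions) that transform the unsorted bracket-ID string into $B$, a string of symbol IDs, and a string of zone value IDs. Symbols are arranged in a fixed "brackets table" of four zones, where each symbol is identified by its bracket ID (column), symbol ID (row code) and the value ID of its zone. Decompression of a requested identifier proceeds as follows: (1) locate the record and retrieve its base $B$ by searching over the stored bases using the identifier; (2) read the swap information and perform the recorded swaps in reverse to recover the unsorted bracket-ID string; (3) for each position, recover the symbol from its triple (bracket ID, symbol ID, value ID) by scanning the brackets table; this yields $F'$, which is returned. *)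

theory Defs
  imports Main
begin

text \<open>Every function returns its result together with the number of elementary
  steps (comparisons / swaps / table-entry inspections) it performs.\<close>

text \<open>The alphabet Sigma = {0,1}^k, of size N = 2^k.\<close>
definition sigma :: "nat \<Rightarrow> bool list set" where
  "sigma k = {xs. length xs = k}"

text \<open>A brackets-table entry: (bracket ID, symbol ID, value ID, symbol).\<close>
type_synonym entry = "nat \<times> nat \<times> nat \<times> bool list"

definition entry_sym :: "entry \<Rightarrow> bool list" where
  "entry_sym e = snd (snd (snd e))"

record crecord =
  fid :: nat
  bitmap :: "bool list"
  partners :: "nat list"
  symids :: "nat list"
  valids :: "nat list"

fun find_base :: "(nat \<times> nat list) list \<Rightarrow> nat \<Rightarrow> nat list option \<times> nat" where
  "find_base [] i = (None, 0)"
| "find_base ((j, B) # bs) i =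
     (if j = i then (Some B, 1)
      else (let (r, c) = find_base bs i in (r, Suc c)))"

text \<open>The marked positions
  of the bitmap are paired (in order) with the partner array; the swaps were
  performed left to right, hence are undone right to left (foldr).\<close>
definition swap_list :: "'a list \<Rightarrow> nat \<Rightarrow> nat \<Rightarrow> 'a list" where
  "swap_list xs i j = xs[i := xs ! j, j := xs ! i]"

definition undo_swaps :: "bool list \<Rightarrow> nat list \<Rightarrow> nat list \<Rightarrow> nat list \<times> nat" where
  "undo_swaps bm ps B =
     (let marked = filter (\<lambda>i. bm ! i) [0..<length bm];
          prs = zip marked ps
      in (foldr (\<lambda>(i, j) xs. swap_list xs i j) prs B, length bm + length prs))"

fun table_lookup :: "entry list \<Rightarrow> nat \<times> nat \<times> nat \<Rightarrow> bool list option \<times> nat" where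
  "table_lookup [] t = (None, 0)"
| "table_lookup ((b, s, v, x) # es) t =
     (if (b, s, v) = t then (Some x, 1)
      else (let (r, c) = table_lookup es t in (r, Suc c)))"

fun lookup_all :: "entry list \<Rightarrow> (nat \<times> nat \<times> nat) list \<Rightarrow> bool list list option \<times> nat" where
  "lookup_all tbl [] = (Some [], 0)"
| "lookup_all tbl (t # ts) =
     (let (r, c) = table_lookup tbl t;
          (rs, c') = lookup_all tbl ts
      in (case (r, rs) of (Some x, Some xs) \<Rightarrow> Some (x # xs) | _ \<Rightarrow> None, c + c'))"

definition decompress ::
  "(nat \<times> nat list) list \<Rightarrow> entry list \<Rightarrow> crecord \<Rightarrow> bool list list option \<times> nat" where
  "decompress bases tbl r =
     (case find_base bases (fid r) of
        (None, c1) \<Rightarrow> (None, c1)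
      | (Some B, c1) \<Rightarrow>
          (let (U, c2) = undo_swaps (bitmap r) (partners r) B;
               (F, c3) = lookup_all tbl (zip U (zip (symids r) (valids r)))
           in (F, c1 + c2 + c3)))"

end

theory Submission
  imports Defs
begin

lemma fb_cost: "snd (find_base bs i) \<le> length bs"
  by (induction bs i rule: find_base.induct) (auto simp: split_beta)

lemma tl_cost: "snd (table_lookup es t) \<le> length es"
  by (induction es t rule: table_lookup.induct) (auto simp: split_beta)

lemma la_cost: "snd (lookup_all tbl ts) \<le> length ts * length tbl"
proof (induction tbl ts rule: lookup_all.induct)
  case (2 tbl t ts)
  have "snd (table_lookup tbl t) \<le> length tbl" by (rule tl_cost)
  moreover have "snd (lookup_all tbl ts) \<le> length ts * length tbl"
    using 2 by (metis prod.collapse)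
  ultimately show ?case by (auto simp: split_beta)
qed simp

lemma us_cost: "snd (undo_swaps bm ps B) \<le> 2 * length bm"
  unfolding undo_swaps_def Let_def
  using length_filter_le[of "\<lambda>i. bm ! i" "[0..<length bm]"] by auto


theorem theorem4:
  "\<exists>C::nat. \<forall>(k::nat) (bases :: (nat \<times> nat list) list) (tbl :: entry list)
       (r :: crecord) (n_b :: nat).
     distinct (map entry_sym tbl) \<longrightarrow> set (map entry_sym tbl) = sigma k \<longrightarrow>
     length (bitmap r) = n_b \<longrightarrow> length (symids r) = n_b \<longrightarrow>
     length (valids r) = n_b \<longrightarrow> length (partners r) \<le> n_b \<longrightarrow>
     snd (decompress bases tbl r) \<le> C * (length bases + n_b * card (sigma k))"
proof (intro exI[of _ 3] allI impI)
  fix k :: nat and bases :: "(nat \<times> nat list) list" and tbl :: "entry list" and r :: crecord and n_b :: nat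
  assume d: "distinct (map entry_sym tbl)" and s: "set (map entry_sym tbl) = sigma k"
    and l1: "length (bitmap r) = n_b" and l2: "length (symids r) = n_b"
    and l3: "length (valids r) = n_b" and l4: "length (partners r) \<le> n_b"
  have N: "card (sigma k) = length tbl"
    using distinct_card[OF d] s by simp
  have "replicate k True \<in> sigma k" by (simp add: sigma_def)
  hence "tbl \<noteq> []" using s by auto
  hence Npos: "length tbl \<ge> 1" by (cases tbl) auto
  have c1: "snd (find_base bases (fid r)) \<le> length bases" by (rule fb_cost)
  show "snd (decompress bases tbl r) \<le> 3 * (length bases + n_b * card (sigma k))"
  proof (cases "find_base bases (fid r)")
    case (Pair o1 a)
    show ?thesis
    proof (cases o1)
      case None
      then show ?thesis using Pair c1 by (simp add: decompress_def)
    next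
      case (Some B)
      obtain U b where U: "undo_swaps (bitmap r) (partners r) B = (U, b)" by fastforce
      have b: "b \<le> 2 * n_b" using us_cost[of "bitmap r" "partners r" B] U l1 by simp
      obtain F c where F: "lookup_all tbl (zip U (zip (symids r) (valids r))) = (F, c)" by fastforce
      have "c \<le> length (zip U (zip (symids r) (valids r))) * length tbl"
        using la_cost[of tbl "zip U (zip (symids r) (valids r))"] F by simp
      also have "\<dots> \<le> n_b * length tbl" using l2 l3 by simp
      finally have c: "c \<le> n_b * length tbl" .
      have a: "a \<le> length bases" using c1 Pair by simp
      have "n_b \<le> n_b * length tbl" using Npos by simp
      hence "snd (decompress bases tbl r) = a + b + c"
        using Pair Some U F by (simp add: decompress_def)
      moreover have "a + b + c \<le> 3 * (length bases + n_b * length tbl)"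
        using a b c \<open>n_b \<le> n_b * length tbl\<close>
        by (simp only: distrib_left)
      ultimately show ?thesis using N by simp
    qed
  qed
qed

end
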